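(* Let $m,k\in\mathbb{N}$ and let $\beta\in\mathbb{C}$ with $\beta\notin\mathbb{Z}_0^-$ and $\frac{1+\beta}{2}-m\notin\mathbb{Z}_0^-$. Then \[ {}_3F_2\left[\begin{array}{r} -2m,\ \beta,\ -m-k-\tfrac{1}{2};\\ -2m-2k-1,\ \tfrac{1+\beta}{2}-m;\end{array}1\right]_{2m}=\frac{\left(\frac{1}{2}\right)_m\left(\frac{2+\beta+2k}{2}\right)_m}{\left(\frac{1-\beta}{2}\right)_m\left(1+k\right)_m}. \]
   Context: $\mathbb{N}=\{1,2,3,\dots\}$, $\mathbb{Z}_0^-=\{0,-1,-2,\dots\}$. For $a\in\mathbb{C}$ and $n\in\mathbb{N}_0$, $(a)_0=1$ and $(a)_n=a(a+1)\cdots(a+n-1)$ (Pochhammer symbol). For $N\in\mathbb{N}_0$, the truncated series is ${}_3F_2\left[\begin{array}{r} a_1,a_2,a_3;\\ b_1,b_2;\end{array}z\right]_N=\sum_{n=0}^{N}\frac{(a_1)_n(a_2)_n(a_3)_n}{(b_1)_n(b_2)_n}\frac{z^n}{n!}$ (the sum of the first $N+1$ terms), defined whenever $(b_1)_n(b_2)_n\neq0$ for $0\le n\le N$. *)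

theory Defs
  imports Complex_Main
begin

definition hyp3F2_trunc ::
  "complex \<Rightarrow> complex \<Rightarrow> complex \<Rightarrow> complex \<Rightarrow> complex \<Rightarrow> complex \<Rightarrow> nat \<Rightarrow> complex" where
  "hyp3F2_trunc a1 a2 a3 b1 b2 z N =
     (\<Sum>n = 0..N. pochhammer a1 n * pochhammer a2 n * pochhammer a3 n
        / (pochhammer b1 n * pochhammer b2 n) * z ^ n / of_nat (fact n))"

definition nonpos_ints_c :: "complex set" where
  "nonpos_ints_c = {z. \<exists>n::nat. z = - of_nat n}"

end

theory Submission
  imports Defs
begin


lemma sh1: "(y'::complex) = y + 1 \<Longrightarrow> pochhammer y n * (y + of_nat n) = y * pochhammer y' n"
  using pochhammer_Suc[of y n] pochhammer_rec[of y n] by simp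

lemma sh2:
  fixes x :: complex
  shows "pochhammer x n * ((x-2)*(x-1)) = pochhammer (x-2) n * (x-2+of_nat n) * (x-1+of_nat n)"
proof -
  have e1: "pochhammer (x-2) n * (x-2+of_nat n) = (x-2) * pochhammer (x-1) n" by (rule sh1) simp
  have e2: "pochhammer (x-1) n * (x-1+of_nat n) = (x-1) * pochhammer x n" by (rule sh1) simp
  have "pochhammer x n * ((x-2)*(x-1)) = (x-2)*((x-1)*pochhammer x n)" by (simp add: ac_simps)
  also have "\<dots> = (x-2)*(pochhammer (x-1) n * (x-1+of_nat n))" using e2 by simp
  also have "\<dots> = ((x-2)*pochhammer (x-1) n) * (x-1+of_nat n)" by (simp add: ac_simps)
  also have "\<dots> = pochhammer (x-2) n * (x-2+of_nat n) * (x-1+of_nat n)" using e1 by simp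
  finally show ?thesis .
qed

lemma sh1g: "(y'::complex) = y + 1 \<Longrightarrow> w = y + of_nat n \<Longrightarrow> pochhammer y n * w = y * pochhammer y' n"
  using sh1 by blast

lemma sh2g:
  fixes x :: complex
  assumes "x2 = x-2" "x1 = x-1" "w2 = x2 + of_nat n" "w1 = x1 + of_nat n"
  shows "pochhammer x n * (x2*x1) = pochhammer x2 n * w2 * w1"
  using sh2[of x n] assms by simp

lemma ratio1:
  fixes Aq Bt Cq Dq Eq Fc x bb y z w s :: complex
  assumes "Dq \<noteq> 0" "Eq \<noteq> 0" "Fc \<noteq> 0" "z \<noteq> 0" "w \<noteq> 0" "s \<noteq> 0"
  shows "Aq*x*(Bt*bb)*(Cq*y)/((Dq*z)*(Eq*w))*1/(s*Fc) = (Aq*Bt*Cq/(Dq*Eq)*1/Fc)*(x*bb*y/(z*w*s))"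
  using assms by (simp add: field_simps)

lemma ratio0:
  fixes A A0 Bt C C0 D D0 E E0 Fc x1 x2 y1 z1 z2 w1 a1 a2 c1 d1 d2 e1 :: complex
  assumes "A0*(a1*a2) = A*x1*x2" "C0*c1 = C*y1" "D0*(d1*d2) = D*z1*z2" "E0*e1 = E*w1"
    and nz: "a1 \<noteq> 0" "a2 \<noteq> 0" "c1 \<noteq> 0" "d1 \<noteq> 0" "d2 \<noteq> 0" "e1 \<noteq> 0" "z1 \<noteq> 0" "z2 \<noteq> 0" "w1 \<noteq> 0"
      "D \<noteq> 0" "E \<noteq> 0" "Fc \<noteq> 0"
  shows "A0*Bt*C0/(D0*E0)*1/Fc = (A*Bt*C/(D*E)*1/Fc) * (x1*x2*y1*d1*d2*e1/(a1*a2*c1*z1*z2*w1))"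
proof -
  have q: "A0 = A*x1*x2/(a1*a2)" "C0 = C*y1/c1" "D0 = D*z1*z2/(d1*d2)" "E0 = E*w1/e1"
    using assms by (simp_all add: field_simps)
  show ?thesis unfolding q using nz by (simp add: field_simps)
qed


lemma key_poly:
  fixes M N u p :: complex
  shows "(M+1)*(N-2*p)*(N-2*p+1)*(u+N) - (u+M+p)*(N-2*M-2)*(N-2*M-1)*(N-p)
     = -(N-M-p)*(N-2*M-2)*(2*u+2*M+1+N)*(N-p) + N*(N-M-p-1)*(N-2*p+1)*(u+N)"
  by algebra

lemma key_rat_abs:
  fixes M N u p A B C P Q R S :: complex
  assumes nz: "A \<noteq> 0" "B \<noteq> 0" "C \<noteq> 0" "u \<noteq> 0" "P \<noteq> 0" "Q \<noteq> 0" "R \<noteq> 0" "S \<noteq> 0"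
    and hA: "A = N-2*p" and hB: "B = N-2*p+1" and hC: "C = u+N" and hP: "P = M+1" and hQ: "Q = 2*M+1"
    and hR: "R = 2*p-1" and hS: "S = N+1"
  shows "1 - (Q*(u+M+p)/(-u*R)) * ((N-2*M-2)*(N-2*M-1)*(N-p)*(-R)*u/(P*Q*A*B*C))
   = (-S*(N-M-p)/(P*B)) * ((N-2*M-2)*(2*u+2*M+1+N)*(N-p)/(A*C*S))
     - (-N*(N-M-p-1)/(P*A))"
proof -
  have "1 - (Q*(u+M+p)/(-u*R)) * ((N-2*M-2)*(N-2*M-1)*(N-p)*(-R)*u/(P*Q*A*B*C))
      = (P*A*B*C - (u+M+p)*(N-2*M-2)*(N-2*M-1)*(N-p)) / (P*A*B*C)"
    using nz by (simp add: field_simps)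
  also have "\<dots> = (-(N-M-p)*(N-2*M-2)*(2*u+2*M+1+N)*(N-p) + N*(N-M-p-1)*B*C) / (P*A*B*C)"
    unfolding hA hB hC hP using key_poly[of M N p u] by simp
  also have "\<dots> = (-S*(N-M-p)/(P*B)) * ((N-2*M-2)*(2*u+2*M+1+N)*(N-p)/(A*C*S))
     - (-N*(N-M-p-1)/(P*A))"
    using nz by (simp add: field_simps)
  finally show ?thesis .
qed

definition tt :: "complex \<Rightarrow> nat \<Rightarrow> nat \<Rightarrow> nat \<Rightarrow> complex" where
  "tt b k m n = pochhammer (- 2 * of_nat m) n * pochhammer b n * pochhammer (- of_nat m - of_nat k - 1/2) n
        / (pochhammer (- 2 * of_nat m - 2 * of_nat k - 1) n * pochhammer ((1 + b) / 2 - of_nat m) n) * 1 ^ n / of_nat (fact n)"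

definition lamf :: "complex \<Rightarrow> nat \<Rightarrow> nat \<Rightarrow> complex" where
  "lamf b k m = (2*of_nat m+1)*(((1+b)/2 - of_nat m - 1) + of_nat m + (of_nat m + of_nat k + 3/2))
      / (-((1+b)/2 - of_nat m - 1) * (2*(of_nat m + of_nat k + 3/2) - 1))"

definition gg :: "complex \<Rightarrow> nat \<Rightarrow> nat \<Rightarrow> nat \<Rightarrow> complex" where
  "gg b k m n = -(of_nat n)*(of_nat n - of_nat m - (of_nat m + of_nat k + 3/2) - 1)
      /((of_nat m+1)*(of_nat n - 2*(of_nat m + of_nat k + 3/2))) * tt b k (Suc m) n"

lemma step_n:
  fixes b :: complex and k m n :: nat
  assumes k: "k \<ge> 1" and H: "\<And>j::nat. (1+b)/2 - of_nat (Suc m) + of_nat j \<noteq> 0" and n: "n \<le> 2*m+2"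
  shows "tt b k (Suc m) n - lamf b k m * tt b k m n = gg b k m (Suc n) - gg b k m n"
proof -
  define M :: complex where "M = of_nat m"
  define K :: complex where "K = of_nat k"
  define N :: complex where "N = of_nat n"
  define p where "p = M + K + 3/2"
  define u where "u = (1+b)/2 - M - 1"
  define A' where "A' = N - 2*p"
  define B' where "B' = N - 2*p + 1"
  define C' where "C' = u + N"
  define P where "P = M + 1"
  define Q where "Q = 2*M + 1"
  define R where "R = 2*p - 1"
  define S where "S = N + 1"
  have pe: "2*p = of_nat (2*m+2*k+3)" unfolding p_def M_def K_def by (simp add: field_simps)
  have nA: "A' \<noteq> 0"
  proof
    assume "A' = 0"
    then have "of_nat n = (of_nat (2*m+2*k+3) :: complex)" unfolding A'_def N_def pe[symmetric] by simp
    then have "n = 2*m+2*k+3" using of_nat_eq_iff by blast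
    then show False using n by simp
  qed
  have nB: "B' \<noteq> 0"
  proof
    assume "B' = 0"
    then have "of_nat (n+1) = (of_nat (2*m+2*k+3) :: complex)" unfolding B'_def N_def pe[symmetric]
      by (simp add: algebra_simps)
    then have "n+1 = 2*m+2*k+3" using of_nat_eq_iff by blast
    then show False using n k by simp
  qed
  have hu: "\<And>j. u + of_nat j \<noteq> 0" using H unfolding u_def M_def by (simp add: algebra_simps)
  have nC: "C' \<noteq> 0" unfolding C'_def N_def by (rule hu)
  have nu: "u \<noteq> 0" using hu[of 0] by simp
  have nP: "P \<noteq> 0" unfolding P_def M_def by (metis of_nat_Suc of_nat_eq_0_iff add.commute nat.distinct(1))
  have nQ: "Q \<noteq> 0" unfolding Q_def M_def by (metis of_nat_Suc of_nat_eq_0_iff add.commute nat.distinct(1) of_nat_mult of_nat_numeral)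
  have nR: "R \<noteq> 0"
  proof -
    have "R = of_nat (2*m+2*k+2)" unfolding R_def pe by simp
    then show ?thesis by (metis of_nat_eq_0_iff add_2_eq_Suc' nat.distinct(1))
  qed
  have nS: "S \<noteq> 0" unfolding S_def N_def by (metis of_nat_Suc of_nat_eq_0_iff add.commute nat.distinct(1))
  have np: "p \<noteq> 0"
  proof
    assume "p = 0"
    then have "(of_nat (2*m+2*k+3)::complex) = 0" using pe by simp
    then show False by (simp only: of_nat_eq_0_iff)
  qed
  have nD: "pochhammer (-2*p) n \<noteq> 0"
  proof
    assume "pochhammer (-2*p) n = 0"
    then obtain j where j: "j < n" "-2*p = - of_nat j" unfolding pochhammer_eq_0_iff by blast
    have "2*p = of_nat j" using j(2) by (metis minus_mult_left neg_equal_iff_equal)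
    then have "of_nat j = (of_nat (2*m+2*k+3) :: complex)" using pe by simp
    then have "j = 2*m+2*k+3" using of_nat_eq_iff by blast
    then show False using j n by simp
  qed
  have nE: "pochhammer u n \<noteq> 0"
  proof
    assume "pochhammer u n = 0"
    then obtain j where j: "u = - of_nat j" unfolding pochhammer_eq_0_iff by blast
    then show False using hu[of j] by simp
  qed
  have nF: "(of_nat (fact n) :: complex) \<noteq> 0" by simp
  define T where "T = pochhammer (-2*M-2) n * pochhammer b n * pochhammer (-p) n / (pochhammer (-2*p) n * pochhammer u n) * 1 / of_nat (fact n)"
  have pa1: "(- 2 * of_nat (Suc m) :: complex) = -2*M-2" unfolding M_def by simp
  have pc1: "(- of_nat (Suc m) - of_nat k - 1/2 :: complex) = -p" unfolding p_def M_def K_def by simp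
  have pd1: "(-2*M-2 - 2 * of_nat k - 1 :: complex) = -2*p" unfolding p_def K_def by simp
  have pe1: "(1 + b) / 2 - of_nat (Suc m) = u" unfolding u_def M_def by simp
  have tS: "tt b k (Suc m) n = T" unfolding tt_def pa1 pc1 pd1 pe1 T_def by simp
  have tS1: "tt b k (Suc m) (Suc n) = T * ((-2*M-2+N)*(b+N)*(-p+N)/((-2*p+N)*(u+N)*S))"
  proof -
    have "tt b k (Suc m) (Suc n) = pochhammer (-2*M-2) n * (-2*M-2+N) * (pochhammer b n * (b+N)) * (pochhammer (-p) n * (-p+N))
       / ((pochhammer (-2*p) n * (-2*p+N)) * (pochhammer u n * (u+N))) * 1 / (S * of_nat (fact n))"
      unfolding tt_def pa1 pc1 pd1 pe1 pochhammer_Suc N_def S_def by (simp add: algebra_simps)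
    also have "\<dots> = T * ((-2*M-2+N)*(b+N)*(-p+N)/((-2*p+N)*(u+N)*S))"
      unfolding T_def
      by (rule ratio1) (use nD nE nF nA nC nS in \<open>simp_all add: A'_def C'_def\<close>)
    finally show ?thesis .
  qed
  have pa0: "(- 2 * of_nat m :: complex) = -2*M" unfolding M_def by simp
  have pc0: "(- of_nat m - of_nat k - 1/2 :: complex) = -p+1" unfolding p_def M_def K_def by simp
  have pd0: "(-2*M - 2 * of_nat k - 1 :: complex) = -2*p+2" unfolding p_def K_def by simp
  have pe0: "(1 + b) / 2 - of_nat m = u+1" unfolding u_def M_def by simp
  define r1 where "r1 = (-2*M-2+N)*(-2*M-1+N)*(-p+N)*(-2*p)*(-2*p+1)*u/((-2*M-2)*(-2*M-1)*(-p)*(-2*p+N)*(-2*p+1+N)*(u+N))"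
  have t0: "tt b k m n = T * r1"
  proof -
    have "tt b k m n = pochhammer (-2*M) n * pochhammer b n * pochhammer (-p+1) n / (pochhammer (-2*p+2) n * pochhammer (u+1) n) * 1 / of_nat (fact n)"
      unfolding tt_def pa0 pc0 pd0 pe0 by simp
    also have "\<dots> = T * r1" unfolding T_def r1_def
    proof (rule ratio0)
      show "pochhammer (- 2 * M) n * ((- 2 * M - 2) * (- 2 * M - 1)) = pochhammer (- 2 * M - 2) n * (- 2 * M - 2 + N) * (- 2 * M - 1 + N)"
        by (rule sh2g) (simp_all add: N_def)
      show "pochhammer (- p + 1) n * - p = pochhammer (- p) n * (- p + N)"
        using sh1g[of "-p+1" "-p" "-p+N" n] by (simp add: N_def ac_simps)
      show "pochhammer (- 2 * p + 2) n * (- 2 * p * (- 2 * p + 1)) = pochhammer (- 2 * p) n * (- 2 * p + N) * (- 2 * p + 1 + N)"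
        by (rule sh2g) (simp_all add: N_def)
      show "pochhammer (u + 1) n * u = pochhammer u n * (u + N)"
        using sh1g[of "u+1" u "u+N" n] by (simp add: N_def ac_simps)
      have "- 2 * M - 2 = -2*P" unfolding P_def by (simp add: algebra_simps)
      then show "- 2 * M - 2 \<noteq> 0" using nP by simp
      have "- 2 * M - 1 = -Q" unfolding Q_def by (simp add: algebra_simps)
      then show "- 2 * M - 1 \<noteq> 0" using nQ by simp
      show "- p \<noteq> 0" using np by simp
      show "- 2 * p \<noteq> 0" using np by simp
      have "- 2 * p + 1 = -R" unfolding R_def by (simp add: algebra_simps)
      then show "- 2 * p + 1 \<noteq> 0" using nR by simp
      show "u \<noteq> 0" by (rule nu)
      show "- 2 * p + N \<noteq> 0" using nA unfolding A'_def by (simp add: algebra_simps)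
      show "- 2 * p + 1 + N \<noteq> 0" using nB unfolding B'_def by (simp add: algebra_simps)
      show "u + N \<noteq> 0" using nC unfolding C'_def .
      show "pochhammer (- 2 * p) n \<noteq> 0" by (rule nD)
      show "pochhammer u n \<noteq> 0" by (rule nE)
      show "(of_nat (fact n) :: complex) \<noteq> 0" by (rule nF)
    qed
    finally show ?thesis .
  qed
  have bu: "b = 2*u+2*M+1" unfolding u_def by (simp add: field_simps)
  define lam where "lam = Q*(u+M+p)/(-u*R)"
  define rho1 where "rho1 = (N-2*M-2)*(N-2*M-1)*(N-p)*(-R)*u/(P*Q*A'*B'*C')"
  define rho2 where "rho2 = (N-2*M-2)*(2*u+2*M+1+N)*(N-p)/(A'*C'*S)"
  define g1 where "g1 = -S*(N-M-p)/(P*B')"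
  define g0 where "g0 = -N*(N-M-p-1)/(P*A')"
  have key: "1 - lam * rho1 = g1 * rho2 - g0"
    unfolding lam_def rho1_def rho2_def g1_def g0_def
    by (rule key_rat_abs) (use nA nB nC nu nP nQ nR nS in \<open>simp_all add: A'_def B'_def C'_def P_def Q_def R_def S_def\<close>)
  have r1e: "r1 = rho1"
  proof -
    have "r1 = (N-2*M-2)*(N-2*M-1)*(N-p)*((-2*p)*(-R)*u)/(((-2*P)*(-Q)*(-p))*A'*B'*C')"
      unfolding r1_def A'_def B'_def C'_def P_def Q_def R_def by (simp add: algebra_simps)
    also have "\<dots> = rho1" unfolding rho1_def using np nP nQ nA nB nC by (simp add: field_simps)
    finally show ?thesis .
  qed
  have r2e: "(-2*M-2+N)*(b+N)*(-p+N)/((-2*p+N)*(u+N)*S) = rho2"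
    unfolding rho2_def A'_def C'_def bu by (simp add: algebra_simps)
  have le: "lamf b k m = lam"
    unfolding lamf_def lam_def Q_def R_def p_def u_def M_def K_def by simp
  have g1e: "gg b k m (Suc n) = g1 * tt b k (Suc m) (Suc n)"
    unfolding gg_def g1_def S_def B'_def P_def N_def p_def M_def K_def by (simp add: algebra_simps)
  have g0e: "gg b k m n = g0 * tt b k (Suc m) n"
    unfolding gg_def g0_def A'_def P_def N_def p_def M_def K_def by (simp add: algebra_simps)
  have "tt b k (Suc m) n - lamf b k m * tt b k m n = T * (1 - lam * rho1)"
    unfolding tS t0 le r1e by (simp add: algebra_simps)
  also have "\<dots> = T * (g1 * rho2 - g0)" unfolding key ..
  also have "\<dots> = gg b k m (Suc n) - gg b k m n"
    unfolding g1e g0e tS1 tS r2e by (simp add: algebra_simps)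
  finally show ?thesis .
qed

lemma tt_zero: "n > 2*m \<Longrightarrow> tt b k m n = 0"
proof -
  assume "n > 2*m"
  have "(- 2 * of_nat m :: complex) = - of_nat (2*m)" by simp
  then have "pochhammer (- 2 * of_nat m :: complex) n = 0"
    using pochhammer_of_nat_eq_0_iff[of "2*m" n] \<open>n > 2*m\<close> by simp
  then show ?thesis unfolding tt_def by simp
qed

lemma sum_step:
  fixes b :: complex and k m :: nat
  assumes k: "k \<ge> 1" and H: "\<And>j::nat. (1+b)/2 - of_nat (Suc m) + of_nat j \<noteq> 0"
  shows "(\<Sum>n=0..2*Suc m. tt b k (Suc m) n) = lamf b k m * (\<Sum>n=0..2*m. tt b k m n)"
proof -
  have "(\<Sum>n<2*m+3. tt b k (Suc m) n - lamf b k m * tt b k m n) = (\<Sum>n<2*m+3. gg b k m (Suc n) - gg b k m n)"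
    by (rule sum.cong) (use step_n[OF k H] in auto)
  also have "\<dots> = gg b k m (2*m+3) - gg b k m 0" by (rule sum_lessThan_telescope)
  also have "\<dots> = 0"
  proof -
    have "tt b k (Suc m) (2*m+3) = 0" by (rule tt_zero) simp
    then show ?thesis unfolding gg_def by simp
  qed
  finally have z: "(\<Sum>n<2*m+3. tt b k (Suc m) n - lamf b k m * tt b k m n) = 0" .
  have e1: "{0..2*Suc m} = {..<2*m+3}" by auto
  have e2: "(\<Sum>n<2*m+3. tt b k m n) = (\<Sum>n=0..2*m. tt b k m n)"
  proof -
    have "{..<2*m+3} = {0..2*m} \<union> {2*m+1, 2*m+2}" by auto
    then have "(\<Sum>n<2*m+3. tt b k m n) = (\<Sum>n=0..2*m. tt b k m n) + (\<Sum>n\<in>{2*m+1, 2*m+2}. tt b k m n)"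
      by (simp add: sum.union_disjoint)
    also have "(\<Sum>n\<in>{2*m+1, 2*m+2}. tt b k m n) = 0" by (simp add: tt_zero)
    finally show ?thesis by simp
  qed
  show ?thesis using z unfolding e1 sum_subtractf sum_distrib_left[symmetric] e2 by simp
qed

lemma frac_split:
  fixes a1 a2 b1 b2 c1 c2 d1 d2 :: complex
  shows "(a1*a2)*(b1*b2)/((c1*c2)*(d1*d2)) = (a1*b1/(c1*d1))*(a2*b2/(c2*d2))"
  by (simp add: times_divide_times_eq ac_simps)

lemma main_all:
  fixes b :: complex and k :: nat
  assumes k: "k \<ge> 1"
  shows "(1 + b) / 2 - of_nat m \<notin> nonpos_ints_c \<Longrightarrow>
    (\<Sum>n=0..2*m. tt b k m n) = pochhammer (1/2) m * pochhammer ((2 + b + 2 * of_nat k) / 2) m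
           / (pochhammer ((1 - b) / 2) m * pochhammer (1 + of_nat k) m)"
proof (induction m)
  case 0
  then show ?case by (simp add: tt_def)
next
  case (Suc m)
  have H: "\<And>j::nat. (1+b)/2 - of_nat (Suc m) + of_nat j \<noteq> 0"
  proof
    fix j :: nat assume "(1+b)/2 - of_nat (Suc m) + of_nat j = 0"
    then have "(1+b)/2 - of_nat (Suc m) = - of_nat j" by (simp add: algebra_simps)
    then show False using Suc.prems unfolding nonpos_ints_c_def by blast
  qed
  have H0: "(1 + b) / 2 - of_nat m \<notin> nonpos_ints_c"
  proof
    assume "(1 + b) / 2 - of_nat m \<in> nonpos_ints_c"
    then obtain j where "(1 + b) / 2 - of_nat m = - of_nat j" unfolding nonpos_ints_c_def by blast
    then have "(1+b)/2 - of_nat (Suc m) = - of_nat (Suc j)" by (simp add: algebra_simps)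
    then show False using Suc.prems unfolding nonpos_ints_c_def by blast
  qed
  define M :: complex where "M = of_nat m"
  define K :: complex where "K = of_nat k"
  have lm: "lamf b k m = (1/2 + M) * ((2 + b + 2*K)/2 + M) / (((1-b)/2 + M) * (1 + K + M))"
  proof -
    have nn: "(2*of_nat m+1)*(((1+b)/2 - of_nat m - 1) + of_nat m + (of_nat m + of_nat k + 3/2)) = 2*((1/2 + M) * ((2 + b + 2*K)/2 + M))"
      unfolding M_def K_def by (simp add: field_simps)
    have dd: "(-((1+b)/2 - of_nat m - 1) * (2*(of_nat m + of_nat k + 3/2) - 1)) = 2*(((1-b)/2 + M) * (1 + K + M))"
      unfolding M_def K_def by (simp add: field_simps)
    show ?thesis unfolding lamf_def nn dd by simp
  qed
  have "(\<Sum>n=0..2*Suc m. tt b k (Suc m) n) = lamf b k m * (\<Sum>n=0..2*m. tt b k m n)"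
    by (rule sum_step[OF k H])
  also have "\<dots> = lamf b k m * (pochhammer (1/2) m * pochhammer ((2 + b + 2 * of_nat k) / 2) m
           / (pochhammer ((1 - b) / 2) m * pochhammer (1 + of_nat k) m))" using Suc.IH[OF H0] by simp
  also have "\<dots> = pochhammer (1/2) (Suc m) * pochhammer ((2 + b + 2 * of_nat k) / 2) (Suc m)
           / (pochhammer ((1 - b) / 2) (Suc m) * pochhammer (1 + of_nat k) (Suc m))"
    unfolding pochhammer_Suc frac_split lm M_def K_def by (simp add: ac_simps)
  finally show ?case .
qed

theorem mainTheorem1:
  fixes m k :: nat and \<beta> :: complex
  assumes "m \<ge> 1" and "k \<ge> 1"
    and "\<beta> \<notin> nonpos_ints_c"
    and "(1 + \<beta>) / 2 - of_nat m \<notin> nonpos_ints_c"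
  shows "hyp3F2_trunc (- 2 * of_nat m) \<beta> (- of_nat m - of_nat k - 1/2)
            (- 2 * of_nat m - 2 * of_nat k - 1) ((1 + \<beta>) / 2 - of_nat m) 1 (2 * m)
         = pochhammer (1/2) m * pochhammer ((2 + \<beta> + 2 * of_nat k) / 2) m
           / (pochhammer ((1 - \<beta>) / 2) m * pochhammer (1 + of_nat k) m)"
proof -
  have "hyp3F2_trunc (- 2 * of_nat m) \<beta> (- of_nat m - of_nat k - 1/2)
            (- 2 * of_nat m - 2 * of_nat k - 1) ((1 + \<beta>) / 2 - of_nat m) 1 (2 * m)
        = (\<Sum>n=0..2*m. tt \<beta> k m n)" unfolding hyp3F2_trunc_def tt_def ..
  also have "\<dots> = pochhammer (1/2) m * pochhammer ((2 + \<beta> + 2 * of_nat k) / 2) m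
           / (pochhammer ((1 - \<beta>) / 2) m * pochhammer (1 + of_nat k) m)"
    by (rule main_all[OF assms(2) assms(4)])
  finally show ?thesis .
qed

end
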